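(* Let $N\ge1$, $c>0$, and $\mathbf w=(f_0,\alpha,f_2,\dots,f_N)^T$ with $\alpha\in(-1,1)$ and $f_0\ne0$. Then every eigenvalue of $c\,\tilde{\mathbf D}(\mathbf w)^{-1}\tilde{\mathbf M}(\mathbf w)\tilde{\mathbf D}(\mathbf w)$ (i.e. every characteristic speed of the system $\frac1c\tilde{\mathbf D}\partial_t\mathbf w+\tilde{\mathbf M}\tilde{\mathbf D}\partial_z\mathbf w=\tilde{\mathbf S}$) lies in $[-c,c]$.
   Context: For a parameter $\alpha\in(-1,1)$ define on $[-1,1]$ the weights $\omega(\mu)=(1+\alpha\mu)^{-4}$ and $\tilde\omega(\mu)=(1+\alpha\mu)^{-5}$. Let $\{\phi_k\}_{k\ge0}$ (resp. $\{\tilde\phi_k\}_{k\ge0}$) be the monic orthogonal polynomials on $[-1,1]$ with respect to $\omega$ (resp. $\tilde\omega$); their coefficients depend smoothly on $\alpha$. Set $K_{j,k}=\int_{-1}^1\mu^j\phi_k\,\omega\,d\mu$, $\tilde K_{j,k}=\int_{-1}^1\mu^j\tilde\phi_k\,\tilde\omega\,d\mu$, $\beta_k=K_{k,k}/\tilde K_{k,k}$, $\gamma_k=\tilde K_{k,k}^{-1}\,\partial K_{k,k}/\partial\alpha$. Given $\mathbf w=(f_0,\alpha,f_2,\dots,f_N)^T$, set $f_1:=0$. The $(N+1)\times(N+1)$ matrix $\tilde{\mathbf D}=\tilde{\mathbf D}(\mathbf w)$ (rows/columns indexed $0,\dots,N$) has entries $\tilde D_{0,0}=\beta_0$, $\tilde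 D_{0,1}=\gamma_0f_0$, $\tilde D_{1,0}=\alpha$, $\tilde D_{1,1}=-4f_0$; for $2\le i\le N$: $\tilde D_{i,1}=\gamma_if_i-4f_{i-1}$, $\tilde D_{i,i}=\beta_i$, and $\tilde D_{i,i-1}=\alpha$ when $i\ge3$; all other entries are $0$. Let $\tilde{\boldsymbol\Lambda}=\mathrm{diag}(\tilde K_{0,0},\dots,\tilde K_{N,N})$ and $\tilde{\mathbf M}=\tilde{\boldsymbol\Lambda}^{-1}\mathbf G$ where $G_{i,j}=\int_{-1}^1\mu\,\tilde\phi_i\tilde\phi_j\,\tilde\omega\,d\mu$, $0\le i,j\le N$. *)

theory Defs
  imports "HOL-Analysis.Analysis" "Jordan_Normal_Form.Char_Poly"
    "Jordan_Normal_Form.Gauss_Jordan_Elimination"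
begin

text \<open>Weight (1 + a mu)^(-m) on [-1,1]; m = 4 gives omega, m = 5 gives tilde omega.\<close>
definition wt :: "nat \<Rightarrow> real \<Rightarrow> real \<Rightarrow> real" where
  "wt m a \<mu> = 1 / (1 + a * \<mu>) ^ m"

definition OP :: "nat \<Rightarrow> real \<Rightarrow> nat \<Rightarrow> real poly" where
  "OP m a k = (THE p. degree p = k \<and> lead_coeff p = 1 \<and>
      (\<forall>j<k. integral {-1..1} (\<lambda>\<mu>. \<mu> ^ j * poly p \<mu> * wt m a \<mu>) = 0))"

definition Kmom :: "nat \<Rightarrow> real \<Rightarrow> nat \<Rightarrow> nat \<Rightarrow> real" where
  "Kmom m a j k = integral {-1..1} (\<lambda>\<mu>. \<mu> ^ j * poly (OP m a k) \<mu> * wt m a \<mu>)"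

definition beta :: "real \<Rightarrow> nat \<Rightarrow> real" where
  "beta a k = Kmom 4 a k k / Kmom 5 a k k"

definition gamma :: "real \<Rightarrow> nat \<Rightarrow> real" where
  "gamma a k = deriv (\<lambda>b. Kmom 4 b k k) a / Kmom 5 a k k"

text \<open>The matrix tilde D(w) for w = (f_0, alpha, f_2, ..., f_N); the value f 1 is
  ignored and replaced by 0 (convention f_1 := 0).\<close>
definition Dt :: "nat \<Rightarrow> (nat \<Rightarrow> real) \<Rightarrow> real \<Rightarrow> real Matrix.mat" where
  "Dt N f0 a = (let f = f0(1 := 0) in Matrix.mat (N+1) (N+1) (\<lambda>(i,j).
     if i = 0 \<and> j = 0 then beta a 0
     else if i = 0 \<and> j = 1 then gamma a 0 * f 0
     else if i = 1 \<and> j = 0 then a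
     else if i = 1 \<and> j = 1 then -4 * f 0
     else if 2 \<le> i \<and> j = 1 then gamma a i * f i - 4 * f (i - 1)
     else if 2 \<le> i \<and> j = i then beta a i
     else if 3 \<le> i \<and> j = i - 1 then a
     else 0))"

definition Lambdat :: "nat \<Rightarrow> real \<Rightarrow> real Matrix.mat" where
  "Lambdat N a = Matrix.mat (N+1) (N+1) (\<lambda>(i,j). if i = j then Kmom 5 a i i else 0)"

definition Gt :: "nat \<Rightarrow> real \<Rightarrow> real Matrix.mat" where
  "Gt N a = Matrix.mat (N+1) (N+1) (\<lambda>(i,j).
     integral {-1..1} (\<lambda>\<mu>. \<mu> * poly (OP 5 a i) \<mu> * poly (OP 5 a j) \<mu> * wt 5 a \<mu>))"

definition Mt :: "nat \<Rightarrow> real \<Rightarrow> real Matrix.mat" where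
  "Mt N a = the (mat_inverse (Lambdat N a)) * Gt N a"

end

theory Submission
  imports Defs
begin

definition ipw :: "(real \<Rightarrow> real) \<Rightarrow> real poly \<Rightarrow> real poly \<Rightarrow> real" where
  "ipw h p q = integral {-1..1} (\<lambda>x. h x * poly p x * poly q x)"

lemma ipw_sym: "ipw h p q = ipw h q p"
  unfolding ipw_def by (simp add: mult_ac)

lemma ipw_sum_left:
  assumes h: "continuous_on {-1..1} h" and I: "finite I"
  shows "ipw h (\<Sum>i\<in>I. Polynomial.smult (c i) (p i)) q = (\<Sum>i\<in>I. c i * ipw h (p i) q)"
proof -
  have "ipw h (\<Sum>i\<in>I. Polynomial.smult (c i) (p i)) q
     = integral {-1..1} (\<lambda>x. \<Sum>i\<in>I. c i * (h x * poly (p i) x * poly q x))"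
    unfolding ipw_def poly_sum poly_smult
    by (rule integral_cong) (simp add: sum_distrib_left sum_distrib_right mult_ac)
  also have "\<dots> = (\<Sum>i\<in>I. integral {-1..1} (\<lambda>x. c i * (h x * poly (p i) x * poly q x)))"
    by (rule integral_sum[OF I]) (intro integrable_continuous_interval continuous_intros h)
  also have "\<dots> = (\<Sum>i\<in>I. c i * ipw h (p i) q)"
    unfolding ipw_def by simp
  finally show ?thesis .
qed

lemma ipw_diff_left:
  assumes h: "continuous_on {-1..1} h"
  shows "ipw h (p - r) q = ipw h p q - ipw h r q"
proof -
  have "ipw h (p - r) q = integral {-1..1} (\<lambda>x. h x * poly p x * poly q x - h x * poly r x * poly q x)"
    unfolding ipw_def by (rule integral_cong) (simp add: algebra_simps)
  also have "\<dots> = ipw h p q - ipw h r q"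
    unfolding ipw_def
    by (rule integral_diff) (intro integrable_continuous_interval continuous_intros h)+
  finally show ?thesis .
qed

lemma ipw_zero_left: "ipw h 0 q = 0"
  unfolding ipw_def by simp

lemma ipw_pos:
  assumes h: "continuous_on {-1..1} h" and hp: "\<And>x. x \<in> {-1..1} \<Longrightarrow> h x > 0"
    and p: "p \<noteq> 0"
  shows "ipw h p p > 0"
proof -
  let ?g = "\<lambda>x. h x * poly p x * poly p x"
  have nn: "0 \<le> ?g x" if "x \<in> {-1..1}" for x
  proof -
    have "0 \<le> h x * (poly p x * poly p x)"
      by (metis hp[OF that] less_imp_le mult_nonneg_nonneg zero_le_square)
    then show ?thesis by (simp add: mult.assoc)
  qed
  have cont: "continuous_on {-1..1} ?g" by (intro continuous_intros h)
  have ge: "0 \<le> ipw h p p" unfolding ipw_def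
    by (rule integral_nonneg) (auto intro!: integrable_continuous_interval cont nn)
  moreover have "ipw h p p \<noteq> 0"
  proof
    assume 0: "ipw h p p = 0"
    have e: "cbox (-1::real) 1 = {-1..1}" by (simp add: cbox_interval)
    have "box (-1::real) 1 \<noteq> {}" by simp
    then have "\<forall>x\<in>{-1..1}. ?g x = 0"
      using integral_cbox_eq_0_iff[of "-1" 1 ?g] 0 nn cont unfolding ipw_def e by auto
    then have "\<forall>x\<in>{-1..1}. poly p x = 0"
      using hp by (metis mult_eq_0_iff order_less_irrefl)
    then have "{-1..1::real} \<subseteq> {x. poly p x = 0}" by auto
    then have "finite {-1..1::real}"
      using poly_roots_finite[OF p] finite_subset by blast
    then show False using infinite_Icc[of "-1::real" 1] by simp
  qed
  ultimately show ?thesis by simp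
qed

definition orth :: "(real \<Rightarrow> real) \<Rightarrow> nat \<Rightarrow> real poly \<Rightarrow> bool" where
  "orth h k p \<longleftrightarrow> (\<forall>q. degree q < k \<longrightarrow> ipw h q p = 0)"

lemma orth_from_mono:
  assumes h: "continuous_on {-1..1} h" and m: "\<And>j. j < k \<Longrightarrow> ipw h (monom 1 j) p = 0"
  shows "orth h k p"
  unfolding orth_def
proof (intro allI impI)
  fix q :: "real poly" assume q: "degree q < k"
  have "q = (\<Sum>i\<le>degree q. Polynomial.smult (coeff q i) (monom 1 i))"
    using poly_as_sum_of_monoms[of q] by (simp add: smult_monom)
  then have "ipw h q p = (\<Sum>i\<le>degree q. coeff q i * ipw h (monom 1 i) p)"
    using ipw_sum_left[OF h, of "{..degree q}" "coeff q" "\<lambda>i. monom 1 i" p] by simp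
  also have "\<dots> = 0" using m q by (intro sum.neutral) auto
  finally show "ipw h q p = 0" .
qed

lemma deg0_monic: "degree p = 0 \<Longrightarrow> lead_coeff p = 1 \<Longrightarrow> p = 1"
  by (metis degree_0_id one_pCons)

lemma span_P:
  assumes "\<forall>i\<le>k. degree (P i) = i \<and> lead_coeff (P i) = (1::real)"
    and "degree q \<le> k"
  shows "\<exists>d. q = (\<Sum>i\<le>k. Polynomial.smult (d i) (P i))"
  using assms
proof (induction k arbitrary: q)
  case 0
  then have "P 0 = 1" using deg0_monic by auto
  moreover have "q = [:coeff q 0:]" using 0 degree_0_id[of q] by simp
  moreover have "Polynomial.smult (coeff q 0) 1 = [:coeff q 0:]"
    by (simp add: one_pCons)
  ultimately show ?case
    by (intro exI[of _ "\<lambda>_. coeff q 0"]) simp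
next
  case (Suc k)
  let ?q' = "q - Polynomial.smult (coeff q (Suc k)) (P (Suc k))"
  have dP: "degree (P (Suc k)) = Suc k" "coeff (P (Suc k)) (Suc k) = 1" using Suc.prems by auto
  have "degree ?q' \<le> k"
  proof (rule degree_le, intro allI impI)
    fix i assume i: "k < i"
    show "coeff ?q' i = 0"
    proof (cases "i = Suc k")
      case True then show ?thesis using dP by simp
    next
      case False
      then have "Suc k < i" using i by simp
      then show ?thesis using dP Suc.prems(2) by (simp add: coeff_eq_0)
    qed
  qed
  moreover have "\<forall>i\<le>k. degree (P i) = i \<and> lead_coeff (P i) = (1::real)"
    using Suc.prems(1) by (meson le_SucI)
  ultimately obtain d where d: "?q' = (\<Sum>i\<le>k. Polynomial.smult (d i) (P i))"
    using Suc.IH by blast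
  let ?d = "d(Suc k := coeff q (Suc k))"
  have "(\<Sum>i\<le>Suc k. Polynomial.smult (?d i) (P i)) = (\<Sum>i\<le>k. Polynomial.smult (d i) (P i)) + Polynomial.smult (coeff q (Suc k)) (P (Suc k))"
    by (simp add: sum.atMost_Suc)
  also have "\<dots> = q" using d by (simp add: algebra_simps)
  finally show ?case by metis
qed


lemma P_orth_pair:
  assumes "\<forall>i\<le>k. degree (P i) = i \<and> lead_coeff (P i) = 1 \<and> orth h i (P i)"
    and "i \<le> k" "l \<le> k" "l \<noteq> i"
  shows "ipw h (P l) (P i) = 0"
proof (cases "l < i")
  case True then show ?thesis using assms unfolding orth_def by auto
next
  case False
  then have "i < l" using assms by simp
  then have "ipw h (P i) (P l) = 0" using assms unfolding orth_def by auto
  then show ?thesis by (simp add: ipw_sym)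
qed

lemma op_exists:
  assumes h: "continuous_on {-1..1} h" and hp: "\<And>x. x \<in> {-1..1} \<Longrightarrow> h x > 0"
  shows "\<exists>P. \<forall>i\<le>k. degree (P i) = i \<and> lead_coeff (P i) = 1 \<and> orth h i (P i)"
proof (induction k)
  case 0
  show ?case by (intro exI[of _ "\<lambda>_. 1"]) (simp add: orth_def)
next
  case (Suc k)
  then obtain P where P: "\<forall>i\<le>k. degree (P i) = i \<and> lead_coeff (P i) = 1 \<and> orth h i (P i)"
    by blast
  define c where "c i = ipw h (monom 1 (Suc k)) (P i) / ipw h (P i) (P i)" for i
  define S where "S = (\<Sum>i\<le>k. Polynomial.smult (c i) (P i))"
  define p where "p = monom 1 (Suc k) - S"
  have dS: "degree S \<le> k" unfolding S_def
    by (rule degree_sum_le) (use P in \<open>auto intro: order.trans[OF degree_smult_le]\<close>)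
  have cS: "coeff S (Suc k) = 0" using dS by (simp add: coeff_eq_0)
  have dp: "degree p = Suc k"
  proof -
    have "degree p \<le> Suc k" unfolding p_def
      by (rule degree_diff_le) (use dS in \<open>auto simp: degree_monom_eq\<close>)
    moreover have "coeff p (Suc k) = 1" unfolding p_def using cS by (simp add: coeff_monom)
    ultimately show ?thesis by (metis le_degree le_antisym zero_neq_one)
  qed
  have lp: "lead_coeff p = 1" unfolding dp unfolding p_def using cS by (simp add: coeff_monom)
  have Pnz: "P i \<noteq> 0" if "i \<le> k" for i using P that by (metis leading_coeff_0_iff zero_neq_one)
  have orthPi: "ipw h (P i) p = 0" if i: "i \<le> k" for i
  proof -
    have "ipw h p (P i) = ipw h (monom 1 (Suc k)) (P i) - ipw h S (P i)"
      unfolding p_def by (rule ipw_diff_left[OF h])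
    also have "ipw h S (P i) = (\<Sum>l\<le>k. c l * ipw h (P l) (P i))"
      unfolding S_def by (rule ipw_sum_left[OF h]) simp
    also have "\<dots> = c i * ipw h (P i) (P i) + (\<Sum>l\<in>{..k}-{i}. c l * ipw h (P l) (P i))"
      using i by (subst sum.remove[of _ i]) auto
    also have "(\<Sum>l\<in>{..k}-{i}. c l * ipw h (P l) (P i)) = 0"
      by (intro sum.neutral) (use P_orth_pair[OF P i] in auto)
    also have "c i * ipw h (P i) (P i) = ipw h (monom 1 (Suc k)) (P i)"
      unfolding c_def using ipw_pos[OF h hp Pnz[OF i]] by simp
    finally show ?thesis by (simp add: ipw_sym)
  qed
  have "orth h (Suc k) p" unfolding orth_def
  proof (intro allI impI)
    fix q :: "real poly" assume "degree q < Suc k"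
    then have dq: "degree q \<le> k" by simp
    have Pk: "\<forall>i\<le>k. degree (P i) = i \<and> lead_coeff (P i) = 1" using P by blast
    obtain d where d: "q = (\<Sum>i\<le>k. Polynomial.smult (d i) (P i))"
      using span_P[OF Pk dq] by blast
    have "ipw h q p = (\<Sum>i\<le>k. d i * ipw h (P i) p)"
      unfolding d by (rule ipw_sum_left[OF h]) simp
    also have "\<dots> = 0" using orthPi by simp
    finally show "ipw h q p = 0" .
  qed
  then show ?case using P dp lp
    by (intro exI[of _ "P(Suc k := p)"]) (auto simp: le_Suc_eq)
qed

lemma op_unique:
  assumes h: "continuous_on {-1..1} h" and hp: "\<And>x. x \<in> {-1..1} \<Longrightarrow> h x > 0"
    and p: "degree p = k" "lead_coeff p = 1" "orth h k p"
    and q: "degree q = k" "lead_coeff q = 1" "orth h k q"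
  shows "p = q"
proof (cases "k = 0")
  case True then show ?thesis by (metis deg0_monic p(1,2) q(1,2))
next
  case False
  let ?d = "p - q"
  have "degree ?d \<le> k - 1"
  proof (rule degree_le, intro allI impI)
    fix i assume "k - 1 < i"
    then have "i = k \<or> k < i" using False by auto
    then show "coeff ?d i = 0" using p q by (auto simp: coeff_eq_0)
  qed
  then have dd: "degree ?d < k" using False by simp
  have "ipw h ?d ?d = ipw h ?d p - ipw h ?d q"
    by (subst (1 2 3) ipw_sym) (rule ipw_diff_left[OF h])
  also have "\<dots> = 0" using p(3) q(3) dd unfolding orth_def by simp
  finally have "ipw h ?d ?d = 0" .
  then show ?thesis using ipw_pos[OF h hp, of ?d] by (cases "?d = 0") auto
qed


lemma wt_base_pos:
  fixes a x :: real
  assumes "-1 < a" "a < 1" "x \<in> {-1..1}"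
  shows "1 + a * x > 0"
proof -
  have "abs x \<le> 1" using assms(3) by auto
  then have "abs a * abs x \<le> abs a" by (simp add: mult_left_le)
  then have "abs (a * x) \<le> abs a" by (simp add: abs_mult)
  moreover have "abs a < 1" using assms(1,2) by simp
  moreover have "- (a * x) \<le> abs (a * x)" by simp
  ultimately show ?thesis by linarith
qed

lemma wt_pos: "-1 < a \<Longrightarrow> a < 1 \<Longrightarrow> x \<in> {-1..1} \<Longrightarrow> wt m a x > 0"
  unfolding wt_def using wt_base_pos[of a x] by simp

lemma wt_cont: assumes "-1 < a" "a < 1" shows "continuous_on {-1..1} (wt m a)"
proof -
  have "continuous_on {-1..1} (\<lambda>x. 1 / (1 + a * x) ^ m)"
    by (intro continuous_intros) (use wt_base_pos[OF assms] in force)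
  then show ?thesis unfolding wt_def .
qed

lemma wt2_cont: assumes "-1 < a" "a < 1" shows "continuous_on {-1..1} (\<lambda>x. x * wt m a x)"
  by (intro continuous_intros wt_cont assms)

lemma mono_ipw:
  "integral {-1..1} (\<lambda>\<mu>. \<mu> ^ j * poly p \<mu> * w \<mu>) = ipw w (monom 1 j) p"
  unfolding ipw_def by (rule integral_cong) (simp add: poly_monom mult_ac)

lemma OP_props:
  assumes a: "-1 < a" "a < 1"
  shows "degree (OP m a k) = k \<and> lead_coeff (OP m a k) = 1 \<and> orth (wt m a) k (OP m a k)"
proof -
  note h = wt_cont[OF a, of m] and hp = wt_pos[OF a, of _ m]
  obtain P where P: "\<forall>i\<le>k. degree (P i) = i \<and> lead_coeff (P i) = 1 \<and> orth (wt m a) i (P i)"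
    using op_exists[OF h hp] by blast
  let ?Q = "\<lambda>p. degree p = k \<and> lead_coeff p = 1 \<and>
      (\<forall>j<k. integral {-1..1} (\<lambda>\<mu>. \<mu> ^ j * poly p \<mu> * wt m a \<mu>) = 0)"
  have Pk: "degree (P k) = k" "lead_coeff (P k) = 1" "orth (wt m a) k (P k)" using P by auto
  have "?Q (P k)"
    using Pk unfolding mono_ipw orth_def by (auto simp: degree_monom_eq)
  moreover have "p = P k" if "?Q p" for p
  proof (rule op_unique[OF h hp])
    show "orth (wt m a) k p"
      by (rule orth_from_mono[OF h]) (use that in \<open>auto simp: mono_ipw\<close>)
  qed (use that Pk in auto)
  ultimately have "OP m a k = P k" unfolding OP_def by (rule the_equality)
  then show ?thesis using Pk by simp
qed

lemma Kmom_ipw: "Kmom m a j k = ipw (wt m a) (monom 1 j) (OP m a k)"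
  unfolding Kmom_def mono_ipw ..

lemma Kdiag:
  assumes a: "-1 < a" "a < 1"
  shows "Kmom m a k k = ipw (wt m a) (OP m a k) (OP m a k)" "Kmom m a k k > 0"
proof -
  note h = wt_cont[OF a, of m] and hp = wt_pos[OF a, of _ m]
  note O = OP_props[OF a, of m k]
  let ?p = "OP m a k"
  have z: "ipw (wt m a) (?p - monom 1 k) ?p = 0"
  proof (cases "k = 0")
    case True
    then have "?p = 1" using O deg0_monic by blast
    then show ?thesis using True by (simp add: ipw_zero_left)
  next
    case False
    have "degree (?p - monom 1 k) \<le> k - 1"
    proof (rule degree_le, intro allI impI)
      fix i assume "k - 1 < i"
      then have "i = k \<or> k < i" using False by auto
      then show "coeff (?p - monom 1 k) i = 0" using O by (auto simp: coeff_eq_0 coeff_monom)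
    qed
    then have "degree (?p - monom 1 k) < k" using False by simp
    then show ?thesis using O unfolding orth_def by blast
  qed
  have "Kmom m a k k = ipw (wt m a) ?p ?p - ipw (wt m a) (?p - monom 1 k) ?p"
    unfolding Kmom_ipw ipw_diff_left[OF h] by simp
  then show "Kmom m a k k = ipw (wt m a) ?p ?p" using z by simp
  moreover have "?p \<noteq> 0" using O by (metis leading_coeff_0_iff zero_neq_one)
  ultimately show "Kmom m a k k > 0" using ipw_pos[OF h hp] by simp
qed

lemma OP_orth:
  assumes a: "-1 < a" "a < 1" and "i \<noteq> j"
  shows "ipw (wt m a) (OP m a i) (OP m a j) = 0"
proof (cases "i < j")
  case True then show ?thesis using OP_props[OF a, of m] unfolding orth_def by auto
next
  case False
  then have "j < i" using assms by simp
  then show ?thesis using OP_props[OF a, of m] ipw_sym unfolding orth_def by metis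
qed




lemma ipw_PP:
  assumes h: "continuous_on {-1..1} h" and I: "finite I"
  shows "ipw h (\<Sum>i\<in>I. Polynomial.smult (x i) (p i)) (\<Sum>i\<in>I. Polynomial.smult (x i) (p i))
       = (\<Sum>i\<in>I. \<Sum>j\<in>I. x i * x j * ipw h (p i) (p j))"
proof -
  let ?P = "\<Sum>i\<in>I. Polynomial.smult (x i) (p i)"
  have "ipw h ?P ?P = (\<Sum>i\<in>I. x i * ipw h (p i) ?P)" by (rule ipw_sum_left[OF h I])
  also have "\<dots> = (\<Sum>i\<in>I. x i * (\<Sum>j\<in>I. x j * ipw h (p j) (p i)))"
  proof (intro sum.cong refl)
    fix i
    have "ipw h (p i) ?P = ipw h ?P (p i)" by (rule ipw_sym)
    also have "\<dots> = (\<Sum>j\<in>I. x j * ipw h (p j) (p i))" by (rule ipw_sum_left[OF h I])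
    finally show "x i * ipw h (p i) ?P = x i * (\<Sum>j\<in>I. x j * ipw h (p j) (p i))" by simp
  qed
  also have "\<dots> = (\<Sum>i\<in>I. \<Sum>j\<in>I. x i * x j * ipw h (p i) (p j))"
    unfolding sum_distrib_left
  proof (intro sum.cong refl)
    fix i j
    have "ipw h (p j) (p i) = ipw h (p i) (p j)" by (rule ipw_sym)
    then show "x i * (x j * ipw h (p j) (p i)) = x i * x j * ipw h (p i) (p j)" by simp
  qed
  finally show ?thesis .
qed

lemma ipw_bound:
  assumes w: "continuous_on {-1..1} w" and wp: "\<And>x. x \<in> {-1..1} \<Longrightarrow> w x > 0"
  shows "ipw (\<lambda>x. x * w x) P P \<le> ipw w P P \<and> - ipw w P P \<le> ipw (\<lambda>x. x * w x) P P"
proof -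
  have pt: "x * w x * poly P x * poly P x \<le> w x * poly P x * poly P x \<and>
            - (w x * poly P x * poly P x) \<le> x * w x * poly P x * poly P x" if x: "x \<in> {-1..1}" for x
  proof -
    define t where "t = w x * poly P x * poly P x"
    have t: "0 \<le> t" unfolding t_def
      by (metis wp[OF x] less_imp_le mult.assoc mult_nonneg_nonneg zero_le_square)
    have "0 \<le> (1 - x) * t" "0 \<le> (1 + x) * t" using x t by (auto intro!: mult_nonneg_nonneg)
    then have "x * t \<le> t \<and> - t \<le> x * t" by (auto simp: algebra_simps)
    then show ?thesis unfolding t_def by (simp add: mult_ac)
  qed
  have i1: "(\<lambda>x. x * w x * poly P x * poly P x) integrable_on {-1..1}"
    by (intro integrable_continuous_interval continuous_intros w)
  have i2: "(\<lambda>x. w x * poly P x * poly P x) integrable_on {-1..1}"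
    by (intro integrable_continuous_interval continuous_intros w)
  have "ipw (\<lambda>x. x * w x) P P \<le> ipw w P P"
    unfolding ipw_def by (rule integral_le[OF i1 i2]) (use pt in blast)
  moreover have "integral {-1..1} (\<lambda>x. - (w x * poly P x * poly P x)) \<le> ipw (\<lambda>x. x * w x) P P"
    unfolding ipw_def by (rule integral_le[OF integrable_neg[OF i2] i1]) (use pt in blast)
  ultimately show ?thesis unfolding ipw_def by simp
qed

lemma OP0: assumes "-1 < b" "b < 1" shows "OP m b 0 = 1"
  using OP_props[OF assms, of m 0] deg0_monic by blast

lemma K00: assumes "-1 < b" "b < 1" shows "Kmom m b 0 0 = integral {-1..1} (wt m b)"
  unfolding Kmom_def OP0[OF assms] by simp


lemma aux_frac:
  fixes k4 k5 a d :: real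
  assumes "4 * k4 + a * d = 4 * k5" "k5 \<noteq> 0"
  shows "4 * (k4 / k5) + a * (d / k5) = 4"
proof -
  have "4 * (k4 / k5) + a * (d / k5) = (4 * k4 + a * d) / k5"
    by (simp add: add_divide_distrib)
  also have "\<dots> = 4" using assms by simp
  finally show ?thesis .
qed

lemma four_beta_gamma:
  assumes a: "-1 < a" "a < 1"
  shows "4 * beta a 0 + a * gamma a 0 = 4"
proof -
  let ?U = "{-1<..<1::real}"
  let ?fx = "\<lambda>b \<mu>. -4 * \<mu> / (1 + b * \<mu>) ^ 5"
  have e: "cbox (-1::real) 1 = {-1..1}" by (simp add: cbox_interval)
  have nz: "1 + b * \<mu> \<noteq> 0" if "b \<in> ?U" "\<mu> \<in> {-1..1}" for b \<mu>
    using wt_base_pos[of b \<mu>] that by auto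
  have der: "((\<lambda>b. wt 4 b \<mu>) has_field_derivative ?fx b \<mu>) (at b within ?U)"
    if "b \<in> ?U" "\<mu> \<in> cbox (-1) 1" for b \<mu>
  proof -
    have n: "1 + b * \<mu> \<noteq> 0" using nz that e by auto
    have n': "1 + \<mu> * b \<noteq> 0" using n by (simp add: mult.commute)
    have p8: "(1 + \<mu> * b) ^ 8 = (1 + \<mu> * b) ^ 3 * (1 + \<mu> * b) ^ 5"
      by (simp flip: power_add)
    have eq: "\<mu> * (4 * (1 + \<mu> * b) ^ 3) / (1 + \<mu> * b) ^ 8 = \<mu> * 4 / (1 + \<mu> * b) ^ 5"
    proof -
      have X3: "(1 + \<mu> * b) ^ 3 \<noteq> 0" using n' by simp
      have "\<mu> * (4 * (1 + \<mu> * b) ^ 3) / (1 + \<mu> * b) ^ 8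
          = (1 + \<mu> * b) ^ 3 * (\<mu> * 4) / ((1 + \<mu> * b) ^ 3 * (1 + \<mu> * b) ^ 5)"
        unfolding p8 by (simp add: mult_ac)
      also have "\<dots> = \<mu> * 4 / (1 + \<mu> * b) ^ 5"
        by (rule nonzero_mult_divide_mult_cancel_left[OF X3])
      finally show ?thesis .
    qed
    have eq2: "4 * (\<mu> * (1 + b * \<mu>) ^ 3) / (1 + b * \<mu>) ^ 8 = 4 * \<mu> / (1 + b * \<mu>) ^ 5"
      using eq by (simp add: mult.commute mult.left_commute)
    show ?thesis unfolding wt_def
      by (auto intro!: derivative_eq_intros simp: n n' eq2)
  qed
  have int: "wt 4 b integrable_on cbox (-1) 1" if "b \<in> ?U" for b
    unfolding e using that by (intro integrable_continuous_interval wt_cont) auto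
  have "continuous_on (?U \<times> cbox (-1) 1) (\<lambda>p. -4 * snd p / (1 + fst p * snd p) ^ 5)"
  proof (intro continuous_intros ballI)
    fix p :: "real \<times> real" assume "p \<in> ?U \<times> cbox (-1) 1"
    then have "fst p \<in> ?U" "snd p \<in> {-1..1}" using e by (auto simp: mem_Times_iff)
    then show "(1 + fst p * snd p) ^ 5 \<noteq> 0" using nz by simp
  qed
  then have cont: "continuous_on (?U \<times> cbox (-1) 1) (\<lambda>(b, \<mu>). ?fx b \<mu>)"
    by (simp add: case_prod_beta')
  have "((\<lambda>b. integral (cbox (-1) 1) (wt 4 b)) has_field_derivative integral (cbox (-1) 1) (?fx a))
      (at a within ?U)"
    by (rule leibniz_rule_field_derivative[OF der int cont]) (use a in auto)
  moreover have aw: "at a within ?U = at a" by (rule at_within_open) (use a in auto)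
  ultimately have d1: "((\<lambda>b. integral {-1..1} (wt 4 b)) has_field_derivative integral {-1..1} (?fx a)) (at a)"
    unfolding e by simp
  have "((\<lambda>b. Kmom 4 b 0 0) has_field_derivative integral {-1..1} (?fx a)) (at a)"
  proof (rule has_field_derivative_transform_within_open[OF d1, of ?U])
    show "open ?U" by simp
    show "a \<in> ?U" using a by simp
    fix b assume "b \<in> ?U"
    then show "integral {-1..1} (wt 4 b) = Kmom 4 b 0 0" using K00[of b 4] by simp
  qed
  then have dK: "deriv (\<lambda>b. Kmom 4 b 0 0) a = integral {-1..1} (?fx a)"
    by (rule DERIV_imp_deriv)
  have K5: "Kmom 5 a 0 0 > 0" using Kdiag[OF a] by simp
  have ci: "continuous_on {-1..1} (?fx a)"
  proof (intro continuous_intros ballI)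
    fix x :: real assume "x \<in> {-1..1}"
    then show "(1 + a * x) ^ 5 \<noteq> 0" using nz a by simp
  qed
  have "4 * Kmom 4 a 0 0 + a * integral {-1..1} (?fx a)
      = integral {-1..1} (\<lambda>\<mu>. 4 * wt 4 a \<mu>) + integral {-1..1} (\<lambda>\<mu>. a * ?fx a \<mu>)"
    unfolding K00[OF a] integral_mult_right by simp
  also have "\<dots> = integral {-1..1} (\<lambda>\<mu>. 4 * wt 4 a \<mu> + a * ?fx a \<mu>)"
    by (rule integral_add[symmetric])
      (intro integrable_continuous_interval continuous_intros wt_cont a ci)+
  also have "\<dots> = integral {-1..1} (\<lambda>\<mu>. 4 * wt 5 a \<mu>)"
  proof (rule integral_cong)
    fix \<mu> :: real assume "\<mu> \<in> {-1..1}"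
    then have n: "1 + a * \<mu> \<noteq> 0" using nz a by auto
    define X where "X = 1 + a * \<mu>"
    have X: "X \<noteq> 0" using n X_def by simp
    have "4 * wt 4 a \<mu> + a * ?fx a \<mu> = 4 * X / X ^ 5 - 4 * (a * \<mu>) / X ^ 5"
    proof -
      have X5: "X ^ 5 = X * X ^ 4" by (simp flip: power_Suc)
      have "4 * X / X ^ 5 = X * 4 / (X * X ^ 4)" unfolding X5 by (simp add: mult_ac)
      also have "\<dots> = 4 / X ^ 4" by (rule nonzero_mult_divide_mult_cancel_left[OF X])
      finally have "4 * X / X ^ 5 = 4 / X ^ 4" .
      then show ?thesis unfolding wt_def X_def[symmetric] by simp
    qed
    also have "\<dots> = 4 * (X - a * \<mu>) / X ^ 5" by (simp add: diff_divide_distrib right_diff_distrib)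
    also have "X - a * \<mu> = 1" unfolding X_def by simp
    finally show "4 * wt 4 a \<mu> + a * ?fx a \<mu> = 4 * wt 5 a \<mu>"
      unfolding wt_def X_def by simp
  qed
  also have "\<dots> = 4 * Kmom 5 a 0 0" unfolding K00[OF a] by simp
  finally have "4 * Kmom 4 a 0 0 + a * deriv (\<lambda>b. Kmom 4 b 0 0) a = 4 * Kmom 5 a 0 0"
    unfolding dK .
  then show ?thesis unfolding beta_def gamma_def
    by (rule aux_frac) (use K5 in simp)
qed


lemma inv_exists:
  fixes A :: "'a::field mat"
  assumes A: "A \<in> carrier_mat n n"
    and ker: "\<And>v. v \<in> carrier_vec n \<Longrightarrow> A *\<^sub>v v = 0\<^sub>v n \<Longrightarrow> v = 0\<^sub>v n"
  shows "\<exists>B. mat_inverse A = Some B \<and> A * B = 1\<^sub>m n \<and> B * A = 1\<^sub>m n \<and> B \<in> carrier_mat n n"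
proof (cases "mat_inverse A")
  case None
  have "det A \<noteq> 0"
  proof
    assume "det A = 0"
    then obtain v where v: "v \<in> carrier_vec n" "v \<noteq> 0\<^sub>v n" "A *\<^sub>v v = 0\<^sub>v n"
      using det_0_iff_vec_prod_zero_field[OF A] by blast
    then show False using ker[OF v(1,3)] by simp
  qed
  then have U: "A \<in> Units (ring_mat TYPE('a) n ())" by (rule det_non_zero_imp_unit[OF A])
  have "A \<notin> Units (ring_mat TYPE('a) n ())" by (rule mat_inverse(1)[OF A None])
  then show ?thesis using U by simp
next
  case (Some B) then show ?thesis using mat_inverse(2)[OF A Some] by (intro exI[of _ B]) simp
qed

lemma mv_index:
  assumes "A \<in> carrier_mat n n" "x \<in> carrier_vec n" "i < n"
  shows "(A *\<^sub>v x) $ i = (\<Sum>j\<in>{0..<n}. A $$ (i, j) * vec_index x j)"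
  using assms by (auto simp: index_mult_mat_vec scalar_prod_def intro!: sum.cong)

lemma Dt_carrier: "Dt N f a \<in> carrier_mat (N+1) (N+1)"
  by (simp add: Dt_def Let_def)

lemma Dt_index:
  assumes "i < N + 1" "j < N + 1"
  shows "Dt N f a $$ (i, j) =
     (if i = 0 \<and> j = 0 then beta a 0
     else if i = 0 \<and> j = 1 then gamma a 0 * f 0
     else if i = 1 \<and> j = 0 then a
     else if i = 1 \<and> j = 1 then -4 * f 0
     else if 2 \<le> i \<and> j = 1 then gamma a i * (f(1:=0)) i - 4 * (f(1:=0)) (i - 1)
     else if 2 \<le> i \<and> j = i then beta a i
     else if 3 \<le> i \<and> j = i - 1 then a
     else 0)"
  using assms by (simp add: Dt_def Let_def)

lemma Dt_ker:
  assumes N: "N \<ge> 1" and f0: "f 0 \<noteq> 0"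
    and d0: "4 * beta a 0 + a * gamma a 0 \<noteq> 0"
    and bi: "\<And>i. 2 \<le> i \<Longrightarrow> i \<le> N \<Longrightarrow> beta a i \<noteq> 0"
    and x: "x \<in> carrier_vec (N+1)" and Dx: "Dt N f a *\<^sub>v x = 0\<^sub>v (N+1)"
  shows "x = 0\<^sub>v (N+1)"
proof -
  have row: "(\<Sum>j\<in>{0..<N+1}. Dt N f a $$ (i, j) * vec_index x j) = 0" if "i \<le> N" for i
  proof -
    have "(\<Sum>j\<in>{0..<N+1}. Dt N f a $$ (i, j) * vec_index x j) = (Dt N f a *\<^sub>v x) $ i"
      by (rule mv_index[OF Dt_carrier x, symmetric]) (use that in simp)
    also have "\<dots> = 0" using Dx that by simp
    finally show ?thesis .
  qed
  have r0: "(\<Sum>j\<in>{0..<N+1}. Dt N f a $$ (0, j) * vec_index x j) = beta a 0 * vec_index x 0 + gamma a 0 * f 0 * vec_index x 1"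
  proof -
    have "(\<Sum>j\<in>{0..<N+1}. Dt N f a $$ (0, j) * vec_index x j) = (\<Sum>j\<in>{0,1}. Dt N f a $$ (0, j) * vec_index x j)"
      by (rule sum.mono_neutral_right) (use N in \<open>auto simp: Dt_index\<close>)
    also have "\<dots> = beta a 0 * vec_index x 0 + gamma a 0 * f 0 * vec_index x 1"
      using N by (simp add: Dt_index)
    finally show ?thesis .
  qed
  have r1: "(\<Sum>j\<in>{0..<N+1}. Dt N f a $$ (1, j) * vec_index x j) = a * vec_index x 0 + (-4 * f 0) * vec_index x 1"
  proof -
    have "(\<Sum>j\<in>{0..<N+1}. Dt N f a $$ (1, j) * vec_index x j) = (\<Sum>j\<in>{0,1}. Dt N f a $$ (1, j) * vec_index x j)"
      by (rule sum.mono_neutral_right) (use N in \<open>auto simp: Dt_index\<close>)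
    also have "\<dots> = a * vec_index x 0 + (-4 * f 0) * vec_index x 1"
      using N by (simp add: Dt_index)
    finally show ?thesis .
  qed
  have e0: "beta a 0 * vec_index x 0 + gamma a 0 * f 0 * vec_index x 1 = 0" using row[of 0] r0 by simp
  have e1: "a * vec_index x 0 + (-4 * f 0) * vec_index x 1 = 0" using row[of 1] r1 N by simp
  have "f 0 * vec_index x 0 * (4 * beta a 0 + a * gamma a 0) =
      4 * f 0 * (beta a 0 * vec_index x 0 + gamma a 0 * f 0 * vec_index x 1) + gamma a 0 * f 0 * (a * vec_index x 0 + (-4 * f 0) * vec_index x 1)"
    by (simp add: algebra_simps)
  also have "\<dots> = 0" using e0 e1 by simp
  finally have x0: "vec_index x 0 = 0" using f0 d0 by simp
  then have x1: "vec_index x 1 = 0" using e1 f0 by simp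
  have "vec_index x i = 0" if "i \<le> N" for i
    using that
  proof (induction i rule: less_induct)
    case (less i)
    show ?case
    proof (cases "i \<le> 1")
      case True then show ?thesis using x0 x1 by (cases i) auto
    next
      case False
      then have i2: "2 \<le> i" by simp
      have "(\<Sum>j\<in>{0..<N+1}. Dt N f a $$ (i, j) * vec_index x j) = (\<Sum>j\<in>{i}. Dt N f a $$ (i, j) * vec_index x j)"
      proof (rule sum.mono_neutral_right)
        show "\<forall>j\<in>{0..<N+1} - {i}. Dt N f a $$ (i, j) * vec_index x j = 0"
        proof
          fix j assume j: "j \<in> {0..<N+1} - {i}"
          show "Dt N f a $$ (i, j) * vec_index x j = 0"
          proof (cases "j < i")
            case True then show ?thesis using less.IH[of j] less.prems by simp
          next
            case False
            then have "i < j" using j by auto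
            then show ?thesis using j less.prems i2 by (auto simp: Dt_index)
          qed
        qed
      qed (use less.prems in auto)
      also have "\<dots> = beta a i * vec_index x i" using False less.prems by (simp add: Dt_index)
      finally have "beta a i * vec_index x i = 0" using row[OF less.prems] by simp
      then show ?thesis using bi[of i] False less.prems by simp
    qed
  qed
  then show ?thesis using x by (intro eq_vecI) auto
qed

lemma Lambdat_carrier: "Lambdat N a \<in> carrier_mat (N+1) (N+1)"
  by (simp add: Lambdat_def)

lemma Lambdat_mv:
  assumes "x \<in> carrier_vec (N+1)" "i < N + 1"
  shows "(Lambdat N a *\<^sub>v x) $ i = Kmom 5 a i i * vec_index x i"
proof -
  have "(Lambdat N a *\<^sub>v x) $ i = (\<Sum>j\<in>{0..<N+1}. (if i = j then Kmom 5 a i i else 0) * vec_index x j)"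
    using mv_index[OF Lambdat_carrier assms] assms by (auto simp: Lambdat_def intro!: sum.cong)
  also have "\<dots> = (\<Sum>j\<in>{0..<N+1}. if j = i then Kmom 5 a i i * vec_index x j else 0)"
    by (intro sum.cong) auto
  also have "\<dots> = Kmom 5 a i i * vec_index x i"
    by (simp only: sum.delta[OF finite_atLeastLessThan]) (use assms in simp)
  finally show ?thesis .
qed

lemma Lambdat_ker:
  assumes a: "-1 < a" "a < 1" and x: "x \<in> carrier_vec (N+1)" and Lx: "Lambdat N a *\<^sub>v x = 0\<^sub>v (N+1)"
  shows "x = 0\<^sub>v (N+1)"
proof (rule eq_vecI)
  fix i assume "i < dim_vec (0\<^sub>v (N + 1) :: real vec)"
  then have i: "i < N + 1" by simp
  have "Kmom 5 a i i * vec_index x i = 0" using Lambdat_mv[OF x i, of a] Lx i by simp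
  then show "vec_index x i = vec_index (0\<^sub>v (N + 1)) i" using Kdiag(2)[OF a, of 5 i] i by simp
qed (use x in simp)


lemma Gt_carrier: "Gt N a \<in> carrier_mat (N+1) (N+1)"
  by (simp add: Gt_def)

lemma Gt_index:
  assumes "i < N + 1" "j < N + 1"
  shows "Gt N a $$ (i, j) = ipw (\<lambda>x. x * wt 5 a x) (OP 5 a i) (OP 5 a j)"
  using assms unfolding Gt_def ipw_def by (simp add: mult_ac)

lemma quad_bound:
  assumes a: "-1 < a" "a < 1"
  shows "(\<Sum>i\<in>{0..<n}. \<Sum>j\<in>{0..<n}. ipw (\<lambda>x. x * wt 5 a x) (OP 5 a i) (OP 5 a j) * w i * w j)
           \<le> (\<Sum>i\<in>{0..<n}. Kmom 5 a i i * (w i)^2)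
       \<and> - (\<Sum>i\<in>{0..<n}. Kmom 5 a i i * (w i)^2)
           \<le> (\<Sum>i\<in>{0..<n}. \<Sum>j\<in>{0..<n}. ipw (\<lambda>x. x * wt 5 a x) (OP 5 a i) (OP 5 a j) * w i * w j)"
proof -
  let ?P = "\<Sum>i\<in>{0..<n}. Polynomial.smult (w i) (OP 5 a i)"
  have e1: "ipw (\<lambda>x. x * wt 5 a x) ?P ?P =
     (\<Sum>i\<in>{0..<n}. \<Sum>j\<in>{0..<n}. ipw (\<lambda>x. x * wt 5 a x) (OP 5 a i) (OP 5 a j) * w i * w j)"
    unfolding ipw_PP[OF wt2_cont[OF a] finite_atLeastLessThan] by (simp add: mult_ac)
  have "ipw (wt 5 a) ?P ?P = (\<Sum>i\<in>{0..<n}. \<Sum>j\<in>{0..<n}. w i * w j * ipw (wt 5 a) (OP 5 a i) (OP 5 a j))"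
    by (rule ipw_PP[OF wt_cont[OF a] finite_atLeastLessThan])
  also have "\<dots> = (\<Sum>i\<in>{0..<n}. Kmom 5 a i i * (w i)^2)"
  proof (rule sum.cong[OF refl])
    fix i assume i: "i \<in> {0..<n}"
    have "(\<Sum>j\<in>{0..<n}. w i * w j * ipw (wt 5 a) (OP 5 a i) (OP 5 a j))
        = (\<Sum>j\<in>{0..<n}. if j = i then Kmom 5 a i i * (w i)^2 else 0)"
    proof (rule sum.cong[OF refl])
      fix j assume "j \<in> {0..<n}"
      show "w i * w j * ipw (wt 5 a) (OP 5 a i) (OP 5 a j) = (if j = i then Kmom 5 a i i * (w i)^2 else 0)"
      proof (cases "j = i")
        case True then show ?thesis using Kdiag(1)[OF a, of 5 i] by (simp add: power2_eq_square)
      next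
        case False then show ?thesis using OP_orth[OF a, of i j 5] by simp
      qed
    qed
    also have "\<dots> = Kmom 5 a i i * (w i)^2"
      by (simp only: sum.delta[OF finite_atLeastLessThan]) (use i in simp)
    finally show "(\<Sum>j\<in>{0..<n}. w i * w j * ipw (wt 5 a) (OP 5 a i) (OP 5 a j)) = Kmom 5 a i i * (w i)^2" .
  qed
  finally have e2: "ipw (wt 5 a) ?P ?P = (\<Sum>i\<in>{0..<n}. Kmom 5 a i i * (w i)^2)" .
  show ?thesis using ipw_bound[OF wt_cont[OF a] wt_pos[OF a], of 5 ?P] unfolding e1 e2 .
qed

lemma final_real:
  fixes g :: "nat \<Rightarrow> nat \<Rightarrow> real" and K x y :: "nat \<Rightarrow> real" and s t c :: real
  assumes Kp: "\<And>i. i < n \<Longrightarrow> K i > 0"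
    and nz: "\<exists>i<n. x i \<noteq> 0 \<or> y i \<noteq> 0"
    and sym: "\<And>i j. i < n \<Longrightarrow> j < n \<Longrightarrow> g i j = g j i"
    and eR: "\<And>i. i < n \<Longrightarrow> K i * (s * x i - t * y i) = c * (\<Sum>j\<in>{0..<n}. g i j * x j)"
    and eI: "\<And>i. i < n \<Longrightarrow> K i * (s * y i + t * x i) = c * (\<Sum>j\<in>{0..<n}. g i j * y j)"
    and bx: "(\<Sum>i\<in>{0..<n}. \<Sum>j\<in>{0..<n}. g i j * x i * x j) \<le> (\<Sum>i\<in>{0..<n}. K i * (x i)^2)"
            "- (\<Sum>i\<in>{0..<n}. K i * (x i)^2) \<le> (\<Sum>i\<in>{0..<n}. \<Sum>j\<in>{0..<n}. g i j * x i * x j)"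
    and by': "(\<Sum>i\<in>{0..<n}. \<Sum>j\<in>{0..<n}. g i j * y i * y j) \<le> (\<Sum>i\<in>{0..<n}. K i * (y i)^2)"
            "- (\<Sum>i\<in>{0..<n}. K i * (y i)^2) \<le> (\<Sum>i\<in>{0..<n}. \<Sum>j\<in>{0..<n}. g i j * y i * y j)"
    and c: "c > 0"
  shows "t = 0 \<and> -c \<le> s \<and> s \<le> c"
proof -
  let ?I = "{0..<n}"
  define Q where "Q = (\<Sum>i\<in>?I. K i * ((x i)^2 + (y i)^2))"
  define qx where "qx = (\<Sum>i\<in>?I. \<Sum>j\<in>?I. g i j * x i * x j)"
  define qy where "qy = (\<Sum>i\<in>?I. \<Sum>j\<in>?I. g i j * y i * y j)"
  define qxy where "qxy = (\<Sum>i\<in>?I. \<Sum>j\<in>?I. g i j * x i * y j)"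
  define qyx where "qyx = (\<Sum>i\<in>?I. \<Sum>j\<in>?I. g i j * y i * x j)"
  obtain i0 where i0: "i0 < n" "x i0 \<noteq> 0 \<or> y i0 \<noteq> 0" using nz by blast
  have Qpos: "Q > 0" unfolding Q_def
  proof (rule sum_pos2[of ?I i0])
    have "(x i0)^2 + (y i0)^2 > 0" using i0(2) by (auto simp: sum_power2_gt_zero_iff)
    then show "0 < K i0 * ((x i0)^2 + (y i0)^2)" using Kp[OF i0(1)] by simp
  next
    fix i assume "i \<in> ?I"
    then show "0 \<le> K i * ((x i)^2 + (y i)^2)" using Kp[of i] by simp
  qed (use i0 in auto)
  have QKK: "Q = (\<Sum>i\<in>?I. K i * (x i)^2) + (\<Sum>i\<in>?I. K i * (y i)^2)"
    unfolding Q_def by (simp add: distrib_left sum.distrib)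
  have symq: "qxy = qyx"
  proof -
    have "qxy = (\<Sum>j\<in>?I. \<Sum>i\<in>?I. g i j * x i * y j)" unfolding qxy_def by (rule sum.swap)
    also have "\<dots> = qyx" unfolding qyx_def
      by (intro sum.cong refl) (simp add: sym mult_ac)
    finally show ?thesis .
  qed
  have L1: "(\<Sum>i\<in>?I. x i * (K i * (s * x i - t * y i)) + y i * (K i * (s * y i + t * x i))) = s * Q"
    unfolding Q_def sum_distrib_left
    by (intro sum.cong refl) (simp add: algebra_simps power2_eq_square)
  have R1: "(\<Sum>i\<in>?I. x i * (K i * (s * x i - t * y i)) + y i * (K i * (s * y i + t * x i))) = c * (qx + qy)"
  proof -
    have "(\<Sum>i\<in>?I. x i * (K i * (s * x i - t * y i)) + y i * (K i * (s * y i + t * x i)))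
        = (\<Sum>i\<in>?I. x i * (c * (\<Sum>j\<in>?I. g i j * x j)) + y i * (c * (\<Sum>j\<in>?I. g i j * y j)))"
      by (intro sum.cong refl) (simp add: eR eI)
    also have "\<dots> = c * (qx + qy)"
      unfolding qx_def qy_def distrib_left sum.distrib sum_distrib_left
      by (simp add: mult_ac)
    finally show ?thesis .
  qed
  have L2: "(\<Sum>i\<in>?I. y i * (K i * (s * x i - t * y i)) - x i * (K i * (s * y i + t * x i))) = - (t * Q)"
    unfolding Q_def sum_distrib_left sum_negf[symmetric]
    by (intro sum.cong refl) (simp add: algebra_simps power2_eq_square)
  have R2: "(\<Sum>i\<in>?I. y i * (K i * (s * x i - t * y i)) - x i * (K i * (s * y i + t * x i))) = c * (qyx - qxy)"
  proof -
    have "(\<Sum>i\<in>?I. y i * (K i * (s * x i - t * y i)) - x i * (K i * (s * y i + t * x i)))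
        = (\<Sum>i\<in>?I. y i * (c * (\<Sum>j\<in>?I. g i j * x j)) - x i * (c * (\<Sum>j\<in>?I. g i j * y j)))"
      by (intro sum.cong refl) (simp add: eR eI)
    also have "\<dots> = c * (qyx - qxy)"
      unfolding qxy_def qyx_def right_diff_distrib sum_subtractf sum_distrib_left
      by (simp add: mult_ac)
    finally show ?thesis .
  qed
  have "t * Q = 0" using L2 R2 symq by simp
  then have t0: "t = 0" using Qpos by simp
  have sQ: "s * Q = c * (qx + qy)" using L1 R1 by simp
  have b1: "qx + qy \<le> Q" "- Q \<le> qx + qy"
    using bx by' unfolding QKK qx_def qy_def by linarith+
  have "s * Q \<le> c * Q" unfolding sQ using b1 c by (intro mult_left_mono) auto
  then have "s \<le> c" using Qpos by simp
  moreover have "c * (- Q) \<le> c * (qx + qy)" using b1 c by (intro mult_left_mono) auto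
  then have "(-c) * Q \<le> s * Q" unfolding sQ by simp
  then have "-c \<le> s" using Qpos by (rule mult_right_le_imp_le)
  ultimately show ?thesis using t0 by simp
qed


lemma map_smult_real:
  "map_mat complex_of_real (c \<cdot>\<^sub>m A) = complex_of_real c \<cdot>\<^sub>m map_mat complex_of_real A"
  by (rule eq_matI) auto

lemma mv_delta:
  fixes w :: "complex vec"
  assumes "w \<in> carrier_vec (N+1)" "i < N + 1"
  shows "vec_index (map_mat complex_of_real (Lambdat N a) *\<^sub>v w) i = complex_of_real (Kmom 5 a i i) * vec_index w i"
proof -
  have Lc: "map_mat complex_of_real (Lambdat N a) \<in> carrier_mat (N+1) (N+1)"
    using Lambdat_carrier by simp
  have "vec_index (map_mat complex_of_real (Lambdat N a) *\<^sub>v w) i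
      = (\<Sum>j\<in>{0..<N+1}. map_mat complex_of_real (Lambdat N a) $$ (i, j) * vec_index w j)"
    by (rule mv_index[OF Lc assms])
  also have "\<dots> = (\<Sum>j\<in>{0..<N+1}. if j = i then complex_of_real (Kmom 5 a i i) * vec_index w j else 0)"
    using assms by (intro sum.cong) (auto simp: Lambdat_def)
  also have "\<dots> = complex_of_real (Kmom 5 a i i) * vec_index w i"
    by (simp only: sum.delta[OF finite_atLeastLessThan]) (use assms in simp)
  finally show ?thesis .
qed

theorem corollary1:
  fixes N :: nat and c \<alpha> :: real and f :: "nat \<Rightarrow> real"
  assumes "N \<ge> 1" and "c > 0" and "-1 < \<alpha>" and "\<alpha> < 1" and "f 0 \<noteq> 0"
  shows "\<forall>z::complex. eigenvalue (map_mat complex_of_real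
            (c \<cdot>\<^sub>m (the (mat_inverse (Dt N f \<alpha>)) * Mt N \<alpha> * Dt N f \<alpha>))) z
          \<longrightarrow> (\<exists>x::real. z = complex_of_real x \<and> -c \<le> x \<and> x \<le> c)"
proof (intro allI impI)
  note N = assms(1) and cpos = assms(2) and a = assms(3,4) and f0 = assms(5)
  fix z :: complex
  assume ev: "eigenvalue (map_mat complex_of_real
            (c \<cdot>\<^sub>m (the (mat_inverse (Dt N f \<alpha>)) * Mt N \<alpha> * Dt N f \<alpha>))) z"
  define n where "n = N + 1"
  define D where "D = Dt N f \<alpha>"
  define L where "L = Lambdat N \<alpha>"
  define G where "G = Gt N \<alpha>"
  have Dc: "D \<in> carrier_mat n n" unfolding D_def n_def by (rule Dt_carrier)
  have Lc: "L \<in> carrier_mat n n" unfolding L_def n_def by (rule Lambdat_carrier)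
  have Gc: "G \<in> carrier_mat n n" unfolding G_def n_def by (rule Gt_carrier)
  have bi: "beta \<alpha> i \<noteq> 0" for i
    using Kdiag(2)[OF a, of 4 i] Kdiag(2)[OF a, of 5 i] unfolding beta_def by simp
  have Dker: "v = 0\<^sub>v n" if "v \<in> carrier_vec n" "D *\<^sub>v v = 0\<^sub>v n" for v
  proof -
    have "4 * beta \<alpha> 0 + \<alpha> * gamma \<alpha> 0 \<noteq> 0" using four_beta_gamma[OF a] by simp
    from Dt_ker[where N=N and f=f and a=\<alpha> and x=v, OF N f0 this] that bi show ?thesis
      unfolding D_def n_def by simp
  qed
  obtain Di where Di: "mat_inverse D = Some Di" "D * Di = 1\<^sub>m n" "Di * D = 1\<^sub>m n" "Di \<in> carrier_mat n n"
    using inv_exists[OF Dc Dker] by blast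
  have Lker: "v = 0\<^sub>v n" if "v \<in> carrier_vec n" "L *\<^sub>v v = 0\<^sub>v n" for v
    using Lambdat_ker[OF a, of v N] that unfolding L_def n_def by simp
  obtain Li where Li: "mat_inverse L = Some Li" "L * Li = 1\<^sub>m n" "Li * L = 1\<^sub>m n" "Li \<in> carrier_mat n n"
    using inv_exists[OF Lc Lker] by blast
  have Mt: "Mt N \<alpha> = Li * G" unfolding Mt_def L_def[symmetric] G_def[symmetric] using Li(1) by simp
  define A where "A = c \<cdot>\<^sub>m (Di * (Li * G) * D)"
  have Ac: "A \<in> carrier_mat n n" unfolding A_def using Dc Di(4) Li(4) Gc by auto
  have LGc: "Li * G \<in> carrier_mat n n" using Li(4) Gc by auto
  have key: "L * D * A = c \<cdot>\<^sub>m (G * D)"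
  proof -
    have "L * D * A = c \<cdot>\<^sub>m (L * D * (Di * (Li * G) * D))"
      unfolding A_def by (rule mult_smult_distrib) (use Lc Dc Di(4) LGc in auto)
    also have "L * D * (Di * (Li * G) * D) = L * (D * (Di * ((Li * G) * D)))"
      using Lc Dc Di(4) LGc by (simp add: assoc_mult_mat[of _ n n _ n _ n])
    also have "D * (Di * ((Li * G) * D)) = (D * Di) * ((Li * G) * D)"
      using Dc Di(4) LGc by (simp add: assoc_mult_mat[of _ n n _ n _ n])
    also have "\<dots> = (Li * G) * D"
    proof -
      have "(Li * G) * D \<in> carrier_mat n n" using LGc Dc by auto
      then show ?thesis using Di(2) left_mult_one_mat by metis
    qed
    also have "L * ((Li * G) * D) = (L * Li) * (G * D)"
      using Lc Li(4) Gc Dc by (simp add: assoc_mult_mat[of _ n n _ n _ n])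
    also have "\<dots> = G * D"
    proof -
      have "G * D \<in> carrier_mat n n" using Gc Dc by auto
      then show ?thesis using Li(2) left_mult_one_mat by metis
    qed
    finally show ?thesis .
  qed
  let ?R = "map_mat complex_of_real"
  have evA: "eigenvalue (?R A) z"
    using ev unfolding A_def Mt D_def[symmetric] Di(1) by simp
  obtain u where u: "u \<in> carrier_vec n" "u \<noteq> 0\<^sub>v n" "?R A *\<^sub>v u = z \<cdot>\<^sub>v u"
    using evA Ac unfolding eigenvalue_def eigenvector_def by auto
  define v where "v = ?R D *\<^sub>v u"
  have RDc: "?R D \<in> carrier_mat n n" "?R Di \<in> carrier_mat n n" "?R L \<in> carrier_mat n n"
    "?R A \<in> carrier_mat n n" "?R G \<in> carrier_mat n n"
    using Dc Di(4) Lc Ac Gc by auto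
  have vc: "v \<in> carrier_vec n" unfolding v_def using RDc u(1) by auto
  have vnz: "v \<noteq> 0\<^sub>v n"
  proof
    assume v0: "v = 0\<^sub>v n"
    have "?R Di * ?R D = 1\<^sub>m n"
      using of_real_hom.mat_hom_mult[OF Di(4) Dc] Di(3) of_real_hom.mat_hom_one[of n] by metis
    then have "u = (?R Di * ?R D) *\<^sub>v u" using u(1) by simp
    also have "\<dots> = ?R Di *\<^sub>v v" unfolding v_def using RDc u(1) by (simp add: assoc_mult_mat_vec)
    also have "\<dots> = 0\<^sub>v n" unfolding v0 using RDc(2)
      by (intro eq_vecI) (auto simp: index_mult_mat_vec scalar_prod_def)
    finally show False using u(2) by simp
  qed
  have RLDA: "?R L * ?R D * ?R A = ?R (c \<cdot>\<^sub>m G) * ?R D"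
  proof -
    have h1: "?R (L * D) = ?R L * ?R D" by (rule of_real_hom.mat_hom_mult[OF Lc Dc])
    have h2: "?R (L * D * A) = ?R (L * D) * ?R A"
      by (rule of_real_hom.mat_hom_mult) (use Lc Dc Ac in auto)
    have "?R L * ?R D * ?R A = ?R (L * D * A)" by (simp only: h2 h1)
    also have "\<dots> = ?R ((c \<cdot>\<^sub>m G) * D)" unfolding key
      using mult_smult_assoc_mat[OF Gc Dc, of c] by simp
    also have "\<dots> = ?R (c \<cdot>\<^sub>m G) * ?R D"
      by (rule of_real_hom.mat_hom_mult) (use Gc Dc in auto)
    finally show ?thesis .
  qed
  have eqv: "?R L *\<^sub>v (z \<cdot>\<^sub>v v) = ?R (c \<cdot>\<^sub>m G) *\<^sub>v v"
  proof -
    have "?R L *\<^sub>v (z \<cdot>\<^sub>v v) = ?R L *\<^sub>v (?R D *\<^sub>v (z \<cdot>\<^sub>v u))"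
      unfolding v_def using RDc u(1) by (simp add: mult_mat_vec)
    also have "\<dots> = ?R L *\<^sub>v (?R D *\<^sub>v (?R A *\<^sub>v u))" unfolding u(3) ..
    also have "\<dots> = (?R L * ?R D * ?R A) *\<^sub>v u"
    proof -
      have "(?R L * ?R D * ?R A) *\<^sub>v u = (?R L * ?R D) *\<^sub>v (?R A *\<^sub>v u)"
        by (rule assoc_mult_mat_vec) (use RDc u(1) in auto)
      also have "\<dots> = ?R L *\<^sub>v (?R D *\<^sub>v (?R A *\<^sub>v u))"
        by (rule assoc_mult_mat_vec) (use RDc u(1) in auto)
      finally show ?thesis by simp
    qed
    also have "\<dots> = ?R (c \<cdot>\<^sub>m G) *\<^sub>v v" unfolding RLDA v_def
      by (rule assoc_mult_mat_vec) (use RDc u(1) Gc in auto)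
    finally show ?thesis .
  qed
  define x where "x j = Re (vec_index v j)" for j
  define y where "y j = Im (vec_index v j)" for j
  define g where "g i j = G $$ (i, j)" for i j
  define K where "K i = Kmom 5 \<alpha> i i" for i
  have comp: "complex_of_real (K i) * (z * vec_index v i)
      = (\<Sum>j\<in>{0..<n}. complex_of_real (c * g i j) * vec_index v j)" if i: "i < n" for i
  proof -
    have zc: "z \<cdot>\<^sub>v v \<in> carrier_vec (N+1)" using vc unfolding n_def by simp
    have "complex_of_real (K i) * (z * vec_index v i) = vec_index (?R L *\<^sub>v (z \<cdot>\<^sub>v v)) i"
      unfolding L_def K_def using mv_delta[OF zc, of i \<alpha>] i vc unfolding n_def by simp
    also have "\<dots> = vec_index (?R (c \<cdot>\<^sub>m G) *\<^sub>v v) i" unfolding eqv ..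
    also have "\<dots> = (\<Sum>j\<in>{0..<n}. ?R (c \<cdot>\<^sub>m G) $$ (i, j) * vec_index v j)"
      by (rule mv_index) (use Gc vc i in auto)
    also have "\<dots> = (\<Sum>j\<in>{0..<n}. complex_of_real (c * g i j) * vec_index v j)"
      using Gc i unfolding g_def by (intro sum.cong) auto
    finally show ?thesis .
  qed
  have eR: "K i * (Re z * x i - Im z * y i) = c * (\<Sum>j\<in>{0..<n}. g i j * x j)" if "i < n" for i
  proof -
    have "Re (complex_of_real (K i) * (z * vec_index v i))
        = Re (\<Sum>j\<in>{0..<n}. complex_of_real (c * g i j) * vec_index v j)"
      using comp[OF that] by simp
    then show ?thesis unfolding x_def y_def Re_sum by (simp add: sum_distrib_left algebra_simps)
  qed
  have eI: "K i * (Re z * y i + Im z * x i) = c * (\<Sum>j\<in>{0..<n}. g i j * y j)" if "i < n" for i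
  proof -
    have "Im (complex_of_real (K i) * (z * vec_index v i))
        = Im (\<Sum>j\<in>{0..<n}. complex_of_real (c * g i j) * vec_index v j)"
      using comp[OF that] by simp
    then show ?thesis unfolding x_def y_def Im_sum by (simp add: sum_distrib_left algebra_simps)
  qed
  have Kp: "K i > 0" for i unfolding K_def using Kdiag(2)[OF a] by simp
  have nz: "\<exists>i<n. x i \<noteq> 0 \<or> y i \<noteq> 0"
  proof (rule ccontr)
    assume "\<not> ?thesis"
    then have "v = 0\<^sub>v n" using vc unfolding x_def y_def by (intro eq_vecI) (auto simp: complex_eq_iff)
    then show False using vnz by simp
  qed
  have gsym: "g i j = g j i" if "i < n" "j < n" for i j
    unfolding g_def G_def using that Gt_index[of i N j \<alpha>] Gt_index[of j N i \<alpha>] ipw_sym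
    unfolding n_def by metis
  have gq: "(\<Sum>i\<in>{0..<n}. \<Sum>j\<in>{0..<n}. g i j * w i * w j)
     = (\<Sum>i\<in>{0..<n}. \<Sum>j\<in>{0..<n}. ipw (\<lambda>x. x * wt 5 \<alpha> x) (OP 5 \<alpha> i) (OP 5 \<alpha> j) * w i * w j)" for w
    unfolding g_def G_def n_def by (intro sum.cong refl) (simp add: Gt_index)
  have qb: "(\<Sum>i\<in>{0..<n}. \<Sum>j\<in>{0..<n}. g i j * w i * w j) \<le> (\<Sum>i\<in>{0..<n}. K i * (w i)^2)
      \<and> - (\<Sum>i\<in>{0..<n}. K i * (w i)^2) \<le> (\<Sum>i\<in>{0..<n}. \<Sum>j\<in>{0..<n}. g i j * w i * w j)" for w
    unfolding gq K_def by (rule quad_bound[OF a, where n=n and w=w])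
  have res: "Im z = 0 \<and> -c \<le> Re z \<and> Re z \<le> c"
    by (rule final_real[where n=n and K=K and x=x and y=y and g=g and s="Re z" and t="Im z" and c=c])
       (use Kp nz gsym eR eI cpos qb[of x] qb[of y] in auto)
  show "\<exists>x::real. z = complex_of_real x \<and> -c \<le> x \<and> x \<le> c"
    using res by (intro exI[of _ "Re z"]) (simp add: complex_eq_iff)
qed

end
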